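(* Let $1\le k\le n$ and let $f\in L^2\Lambda^k(\Omega)$ with $f\in\mathfrak{B}^k$. Let $\mathcal{T}_h$ and $\mathcal{T}_H$ be nested triangulations ($\mathcal{T}_h$ a refinement of $\mathcal{T}_H$). Write - $(\sigma,u,p)=\mathcal{L}^{-1}f$, - $(\sigma_h,u_h,p_h)=\mathcal{L}_h^{-1}f_{\mathfrak{B}_h}$, - $(\tilde\sigma_h,\tilde u_h,\tilde p_h)=\mathcal{L}_h^{-1}f_{\mathfrak{B}_H}$, - $(\sigma_H,u_H,p_H)=\mathcal{L}_H^{-1}f_{\mathfrak{B}_H}$. Then $\langle\sigma-\sigma_h,\tilde\sigma_h-\sigma_H\rangle=0$.
   Context: Let $\Omega\subset\mathbb{R}^n$ ($n\ge 2$) be a bounded Lipschitz polyhedral domain. Notation for forms: - $L^2\Lambda^j(\Omega)$ is the space of square-integrable $j$-forms, with inner product $\langle\cdot,\cdot\rangle$. - $d$ is the exterior derivative, and $H\Lambda^j(\Omega)=\{\omega\in L^2\Lambda^j: d\omega\in L^2\Lambda^{j+1}\}$. - $\mathfrak{B}^j=dH\Lambda^{j-1}(\Omega)$ and $\mathfrak{Z}^j=\ker d\cap H\Lambda^j$. - $\mathfrak{H}^j=\mathfrak{Z}^j\cap(\mathfrak{B}^j)^\perp$, with $\perp$ the $L^2$-orthogonal complement. Continuous problem: for $g\in L^2\Lambda^k(\Omega)$, $\mathcal{L}^{-1}g=(\sigma,u,p)\in H\Lambda^{k-1}\times H\Lambda^k\times\mathfrak{H}^k$ is the unique solution of - $\langle\sigma,\tau\rangle-\langle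 d\tau,u\rangle=0$ for all $\tau\in H\Lambda^{k-1}$, - $\langle d\sigma,v\rangle+\langle du,dv\rangle+\langle p,v\rangle=\langle g,v\rangle$ for all $v\in H\Lambda^k$, - $\langle u,q\rangle=0$ for all $q\in\mathfrak{H}^k$. Discrete spaces: for a conforming shape-regular simplicial triangulation $\mathcal{T}_h$, the spaces $\Lambda^j_h(\Omega)\subset H\Lambda^j(\Omega)$ are Arnold–Falk–Winther finite element spaces of forms (from $\mathcal{P}_r\Lambda^j$, $\mathcal{P}^-_r\Lambda^j$). They form a subcomplex ($d\Lambda^j_h\subset\Lambda^{j+1}_h$) with bounded commuting cochain projections, and they are nested under refinement. Set $\mathfrak{B}^j_h=d\Lambda^{j-1}_h$, $\mathfrak{Z}_h^j=\ker d\cap\Lambda^j_h$, and $\mathfrak{H}^j_h=\mathfrak{Z}^j_h\cap(\mathfrak{B}^j_h)^\perp$. Discrete problem: $\mathcal{L}_h^{-1}g=(\sigma_h,u_h,p_h)\in\Lambda^{k-1}_h\times\Lambda^k_h\times\mathfrak{H}^k_h$ is the unique solution of the same three equations with test spaces $\Lambda^{k-1}_h,\Lambda^k_h,\mathfrak{H}^k_h$. $\mathcal{L}_H^{-1}$ is defined analogously on $\mathcal{T}_H$. $g_{\mathfrak{B}_h}$ denotes the $L^2$-orthogonal projection of $g$ onto $\mathfrak{B}^k_h$, and similarly for $H$. *)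

theory Defs
  imports "HOL-Analysis.Analysis"
begin

text \<open>Abstract rendering of the relevant part of the L2 de Rham complex
  (degrees k-1, k, k+1):  L2 forms of degree k-1, k, k+1 are modelled by
  real inner product spaces of types 'a, 'b, 'c; the domains H Lambda^(k-1),
  H Lambda^k are subspaces V0, V1, and the exterior derivatives are d0, d1.\<close>

definition orth_proj :: "'a::real_inner set \<Rightarrow> 'a \<Rightarrow> 'a" where
  "orth_proj S g = (THE y. y \<in> S \<and> (\<forall>z\<in>S. inner (g - y) z = 0))"

definition harmonic ::
  "'a::real_inner set \<Rightarrow> 'b::real_inner set \<Rightarrow> ('a \<Rightarrow> 'b) \<Rightarrow> ('b \<Rightarrow> 'c::real_inner) \<Rightarrow> 'b set" where
  "harmonic V0 V1 d0 d1 = {q \<in> V1. d1 q = 0 \<and> (\<forall>b\<in>d0 ` V0. inner q b = 0)}"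

definition hodge_solution ::
  "'a::real_inner set \<Rightarrow> 'b::real_inner set \<Rightarrow> ('a \<Rightarrow> 'b) \<Rightarrow> ('b \<Rightarrow> 'c::real_inner)
   \<Rightarrow> 'b \<Rightarrow> 'a \<Rightarrow> 'b \<Rightarrow> 'b \<Rightarrow> bool" where
  "hodge_solution V0 V1 d0 d1 g \<sigma> u p \<longleftrightarrow>
     \<sigma> \<in> V0 \<and> u \<in> V1 \<and> p \<in> harmonic V0 V1 d0 d1 \<and>
     (\<forall>\<tau>\<in>V0. inner \<sigma> \<tau> - inner (d0 \<tau>) u = 0) \<and>
     (\<forall>v\<in>V1. inner (d0 \<sigma>) v + inner (d1 u) (d1 v) + inner p v = inner g v) \<and>
     (\<forall>q\<in>harmonic V0 V1 d0 d1. inner u q = 0)"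

definition finite_dim_subspace :: "'a::real_vector set \<Rightarrow> bool" where
  "finite_dim_subspace S \<longleftrightarrow> (\<exists>B. finite B \<and> S = span B)"

end

theory Submission
  imports Defs
begin


lemma proj_exists:
  fixes B :: "'a::real_inner set"
  assumes "finite B"
  shows "\<forall>x. \<exists>y\<in>span B. \<forall>z\<in>span B. inner (x - y) z = 0"
  using assms
proof (induction B rule: finite_induct)
  case empty
  then show ?case by auto
next
  case (insert b B)
  show ?case
  proof
    fix x
    obtain yb where yb: "yb \<in> span B" "\<forall>z\<in>span B. inner (b - yb) z = 0"
      using insert.IH by blast
    obtain y0 where y0: "y0 \<in> span B" "\<forall>z\<in>span B. inner (x - y0) z = 0"
      using insert.IH by blast
    define e where "e = b - yb"
    define c where "c = inner (x - y0) e / inner e e"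
    have ein: "e \<in> span (insert b B)"
      unfolding e_def by (meson span_base insertI1 span_diff span_mono subset_insertI yb(1) subsetD)
    have y0in: "y0 \<in> span (insert b B)"
      by (meson span_mono subset_insertI y0(1) subsetD)
    have yin: "y0 + c *\<^sub>R e \<in> span (insert b B)"
      by (simp add: ein span_add span_scale y0in)
    have ce: "inner (x - y0) e - c * inner e e = 0"
    proof (cases "e = 0")
      case True then show ?thesis by simp
    next
      case False then show ?thesis unfolding c_def by simp
    qed
    have "\<forall>z\<in>span (insert b B). inner (x - (y0 + c *\<^sub>R e)) z = 0"
    proof
      fix z assume "z \<in> span (insert b B)"
      then obtain k where k: "z - k *\<^sub>R b \<in> span B" using span_breakdown_eq by blast
      define s where "s = z - k *\<^sub>R b + k *\<^sub>R yb"
      have s: "s \<in> span B" unfolding s_def using k yb(1) by (simp add: span_add span_scale)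
      have z: "z = k *\<^sub>R e + s" unfolding s_def e_def by (simp add: algebra_simps)
      have es: "inner e s = 0" using yb(2) s unfolding e_def by blast
      have xs: "inner (x - y0) s = 0" using y0(2) s by blast
      have "inner (x - (y0 + c *\<^sub>R e)) z
          = k * (inner (x - y0) e - c * inner e e) + inner (x - y0) s - c * inner e s"
        by (simp only: z diff_diff_eq[symmetric] inner_diff_left inner_add_right inner_scaleR_left inner_scaleR_right)
      then show "inner (x - (y0 + c *\<^sub>R e)) z = 0" using ce es xs by simp
    qed
    then show "\<exists>y\<in>span (insert b B). \<forall>z\<in>span (insert b B). inner (x - y) z = 0"
      using yin by blast
  qed
qed

lemma orth_proj_prop:
  fixes S :: "'a::real_inner set"
  assumes "finite_dim_subspace S"
  shows "orth_proj S g \<in> S \<and> (\<forall>z\<in>S. inner (g - orth_proj S g) z = 0)"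
proof -
  obtain B where B: "finite B" "S = span B" using assms unfolding finite_dim_subspace_def by blast
  obtain y where y: "y \<in> S" "\<forall>z\<in>S. inner (g - y) z = 0" using proj_exists[OF B(1)] B(2) by blast
  have uniq: "y' = y" if "y' \<in> S" "\<forall>z\<in>S. inner (g - y') z = 0" for y'
  proof -
    have d: "y - y' \<in> S" using that(1) y(1) B(2) by (simp add: span_diff)
    have "inner (y - y') (y - y') = inner (g - y') (y - y') - inner (g - y) (y - y')"
      by (simp add: inner_diff_left)
    also have "\<dots> = 0" using that(2) y(2) d by simp
    finally show ?thesis by simp
  qed
  have "orth_proj S g = y" unfolding orth_proj_def
  proof (rule the_equality)
    show "y \<in> S \<and> (\<forall>z\<in>S. inner (g - y) z = 0)" using y by blast
  next
    fix y' assume "y' \<in> S \<and> (\<forall>z\<in>S. inner (g - y') z = 0)"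
    then show "y' = y" using uniq by blast
  qed
  then show ?thesis using y by simp
qed

lemma fds_image:
  assumes "linear d" "finite_dim_subspace S"
  shows "finite_dim_subspace (d ` S)"
proof -
  obtain B where B: "finite B" "S = span B" using assms(2) unfolding finite_dim_subspace_def by blast
  have "d ` S = span (d ` B)" using B(2) span_linear_image[OF assms(1)] by simp
  then show ?thesis unfolding finite_dim_subspace_def using B(1) by blast
qed

lemma fds_subspace: "finite_dim_subspace S \<Longrightarrow> subspace S"
  unfolding finite_dim_subspace_def by auto



theorem lemma3p1:
  fixes d0 :: "'a::real_inner \<Rightarrow> 'b::real_inner"
    and d1 :: "'b \<Rightarrow> 'c::real_inner"
    and V0 Vh0 VH0 :: "'a set" and V1 Vh1 VH1 :: "'b set"
    and f :: 'b
    and \<sigma> \<sigma>h \<sigma>t \<sigma>H :: 'a and u uh ut uH p ph pt pH :: 'b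
  assumes "linear d0" and "linear d1"
    and "subspace V0" and "subspace V1"
    and "d0 ` V0 \<subseteq> V1" and "\<forall>x\<in>V0. d1 (d0 x) = 0"
    and "finite_dim_subspace Vh0" and "finite_dim_subspace Vh1"
    and "finite_dim_subspace VH0" and "finite_dim_subspace VH1"
    and "Vh0 \<subseteq> V0" and "Vh1 \<subseteq> V1" and "d0 ` Vh0 \<subseteq> Vh1"
    and "VH0 \<subseteq> Vh0" and "VH1 \<subseteq> Vh1" and "d0 ` VH0 \<subseteq> VH1"
    and "f \<in> d0 ` V0"
    and "hodge_solution V0 V1 d0 d1 f \<sigma> u p"
    and "hodge_solution Vh0 Vh1 d0 d1 (orth_proj (d0 ` Vh0) f) \<sigma>h uh ph"
    and "hodge_solution Vh0 Vh1 d0 d1 (orth_proj (d0 ` VH0) f) \<sigma>t ut pt"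
    and "hodge_solution VH0 VH1 d0 d1 (orth_proj (d0 ` VH0) f) \<sigma>H uH pH"
  shows "inner (\<sigma> - \<sigma>h) (\<sigma>t - \<sigma>H) = 0"
proof -
  note hs = assms(18-21)[unfolded hodge_solution_def]
  have sh0: "subspace Vh0" using assms(7) by (rule fds_subspace)
  have sH0: "subspace VH0" using assms(9) by (rule fds_subspace)
  define g where "g = orth_proj (d0 ` VH0) f"
  have g: "g \<in> d0 ` VH0" "\<forall>z\<in>d0 ` VH0. inner (f - g) z = 0"
    using orth_proj_prop[OF fds_image[OF assms(1) assms(9)], of f] unfolding g_def by auto
  then obtain \<rho> where \<rho>: "\<rho> \<in> VH0" "g = d0 \<rho>" by blast
  have key: "d0 s = g" if W: "subspace W" "W \<subseteq> V0" "\<rho> \<in> W"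
     and sW: "s \<in> W" and V1': "d0 ` W \<subseteq> V1'"
     and eq: "\<forall>v\<in>V1'. inner (d0 s) v + inner (d1 uu) (d1 v) + inner pp v = inner g v"
     and pp: "pp \<in> harmonic W V1' d0 d1" for W V1' s uu pp
  proof -
    define \<tau> where "\<tau> = s - \<rho>"
    have t: "\<tau> \<in> W" unfolding \<tau>_def using W(1,3) sW by (simp add: subspace_diff)
    have dt: "d0 \<tau> = d0 s - g" unfolding \<tau>_def \<rho>(2) using assms(1) by (simp add: linear_diff)
    have z1: "d1 (d0 \<tau>) = 0" using assms(6) W(2) t by blast
    have z2: "inner pp (d0 \<tau>) = 0" using pp t unfolding harmonic_def by blast
    have "d0 \<tau> \<in> V1'" using V1' t by blast
    then have "inner (d0 s) (d0 \<tau>) + inner (d1 uu) (d1 (d0 \<tau>)) + inner pp (d0 \<tau>) = inner g (d0 \<tau>)"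
      using eq by blast
    then have "inner (d0 s) (d0 \<tau>) = inner g (d0 \<tau>)" using z1 z2 by simp
    then have "inner (d0 s - g) (d0 s - g) = 0" using dt by (simp add: inner_diff_left)
    then show ?thesis by simp
  qed
  have rt: "\<rho> \<in> Vh0" using \<rho>(1) assms(14) by blast
  have e3: "\<forall>v\<in>Vh1. inner (d0 \<sigma>t) v + inner (d1 ut) (d1 v) + inner pt v = inner g v"
    using hs(3) unfolding g_def by blast
  have e4: "\<forall>v\<in>VH1. inner (d0 \<sigma>H) v + inner (d1 uH) (d1 v) + inner pH v = inner g v"
    using hs(4) unfolding g_def by blast
  have vH0: "VH0 \<subseteq> V0" using assms(11,14) by blast
  have dt: "d0 \<sigma>t = g"
    using key[OF sh0 assms(11) rt _ assms(13) e3] hs(3) by blast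
  have dH: "d0 \<sigma>H = g"
    using key[OF sH0 vH0 \<rho>(1) _ assms(16) e4] hs(4) by blast
  define w where "w = \<sigma>t - \<sigma>H"
  have "\<sigma>t \<in> Vh0" "\<sigma>H \<in> Vh0" using hs(3,4) assms(14) by blast+
  then have wh: "w \<in> Vh0" unfolding w_def using sh0 by (simp add: subspace_diff)
  have dw: "d0 w = 0" unfolding w_def using dt dH assms(1) by (simp add: linear_diff)
  have w0: "w \<in> V0" using wh assms(11) by blast
  have "inner \<sigma> w - inner (d0 w) u = 0" using hs(1) w0 by blast
  then have "inner \<sigma> w = 0" using dw by simp
  moreover have "inner \<sigma>h w - inner (d0 w) uh = 0" using hs(2) wh by blast
  then have "inner \<sigma>h w = 0" using dw by simp
  ultimately show ?thesis unfolding w_def[symmetric] by (simp add: inner_diff_left)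
qed

end
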